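(* If for every $k\in\mathbb{N}$ there is a vertex $v_k\in V(G)$ lying on $k$ pairwise edge-disjoint cycles of $G$, then $G$ is $\omega$-evadible.
   Context: Cat Herding is played on a simple, possibly infinite graph $G$. The cat first places its token on a vertex. Then the players alternate, the herder moving first: the herder deletes one edge of the current graph, and then, unless the cat's current vertex has degree $0$ in the current graph, the cat moves its token along a finite path with at least one edge in the current graph to a different vertex. The cat is captured when its vertex has degree $0$ in the current graph. $G$ is $k$-evadible if the cat has a strategy (including its choice of starting vertex) that, against every herder strategy, yields a legal cat move after each of the first $k-1$ edge deletions; $G$ is $\omega$-evadible if it is $k$-evadible for every $k\in\mathbb{N}$. *)

theory Defs
  imports Main
begin

definition simple_graph :: "'a set \<Rightarrow> 'a set set \<Rightarrow> bool" where
  "simple_graph V E \<longleftrightarrow> (\<forall>e\<in>E. \<exists>u v. u \<noteq> v \<and> u \<in> V \<and> v \<in> V \<and> e = {u, v})"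

definition adj :: "'a set set \<Rightarrow> ('a \<times> 'a) set" where
  "adj E = {(u, v). {u, v} \<in> E \<and> u \<noteq> v}"

definition is_cycle :: "'a set set \<Rightarrow> 'a list \<Rightarrow> bool" where
  "is_cycle E c \<longleftrightarrow> length c \<ge> 3 \<and> distinct c \<and>
     (\<forall>i < length c. {c ! i, c ! ((i + 1) mod length c)} \<in> E)"

definition cycle_edges :: "'a list \<Rightarrow> 'a set set" where
  "cycle_edges c = {{c ! i, c ! ((i + 1) mod length c)} | i. i < length c}"

(* A cat strategy is a function sigma from the history of deleted edges (in order) to
   the cat's position; sigma [] is the starting vertex.  Herder strategies
   range over all legal deletion sequences (distinct edges of the graph, each an edge of the
   current graph at its time); since the cat strategy may depend on the whole history,
   "against every herder strategy" amounts to "against every legal deletion sequence". *)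
definition k_evadible :: "'a set \<Rightarrow> 'a set set \<Rightarrow> nat \<Rightarrow> bool" where
  "k_evadible V E k \<longleftrightarrow> (\<exists>\<sigma> :: 'a set list \<Rightarrow> 'a. \<sigma> [] \<in> V \<and>
     (\<forall>es. es \<noteq> [] \<and> length es \<le> k - 1 \<and> distinct es \<and> set es \<subseteq> E \<longrightarrow>
        \<sigma> es \<noteq> \<sigma> (butlast es) \<and> (\<sigma> (butlast es), \<sigma> es) \<in> (adj (E - set es))\<^sup>*))"

definition omega_evadible :: "'a set \<Rightarrow> 'a set set \<Rightarrow> bool" where
  "omega_evadible V E \<longleftrightarrow> (\<forall>k. k_evadible V E k)"

end

theory Submission
  imports Defs
begin

lemma cyc_basic:
  assumes "is_cycle E c" "i < length c"
  shows "{c ! i, c ! (Suc i mod length c)} \<in> E" "c ! i \<noteq> c ! (Suc i mod length c)"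
proof -
  show "{c ! i, c ! (Suc i mod length c)} \<in> E" using assms unfolding is_cycle_def by auto
  have m3: "length c \<ge> 3" "distinct c" using assms unfolding is_cycle_def by auto
  have "i \<noteq> Suc i mod length c"
  proof (cases "Suc i = length c")
    case True
    then show ?thesis using m3 by simp
  next
    case False
    then show ?thesis using assms(2) by simp
  qed
  moreover have "Suc i mod length c < length c"
    using mod_less_divisor[of "length c" "Suc i"] assms(2) by linarith
  ultimately show "c ! i \<noteq> c ! (Suc i mod length c)"
    using nth_eq_iff_index_eq[OF m3(2) assms(2)] by blast
qed

lemma cyc_path:
  assumes "is_cycle E c"
    and "\<forall>t<n. {c ! ((a + t) mod length c), c ! (Suc (a + t) mod length c)} \<notin> D"
  shows "(c ! (a mod length c), c ! ((a + n) mod length c)) \<in> (adj (E - D))\<^sup>*"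
  using assms(2)
proof (induction n)
  case 0
  then show ?case by simp
next
  case (Suc n)
  have m: "length c > 0" using assms(1) unfolding is_cycle_def by auto
  define i where "i = (a + n) mod length c"
  have i: "i < length c" using m i_def by simp
  have s: "Suc i mod length c = (a + Suc n) mod length c"
    unfolding i_def by (simp add: mod_Suc_eq)
  have "{c ! i, c ! (Suc i mod length c)} \<in> E" "c ! i \<noteq> c ! (Suc i mod length c)"
    using cyc_basic[OF assms(1) i] by auto
  moreover have "{c ! i, c ! (Suc i mod length c)} \<notin> D"
    using Suc.prems i_def s by (metis add_Suc_right lessI)
  ultimately have "(c ! i, c ! ((a + Suc n) mod length c)) \<in> adj (E - D)"
    using s unfolding adj_def by auto
  moreover have "(c ! (a mod length c), c ! i) \<in> (adj (E - D))\<^sup>*"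
    using Suc i_def by auto
  ultimately show ?case by (meson rtrancl.rtrancl_into_rtrancl)
qed

lemma suc_mod_eq: "x < m \<Longrightarrow> Suc x mod m = (if Suc x = m then 0 else Suc x)"
  by auto

lemma mod2: "(x::nat) < 2 * m \<Longrightarrow> x mod m = (if x < m then x else x - m)"
  by (simp add: le_mod_geq)

lemma cyc_edge_inj:
  assumes "is_cycle E c" "i < length c" "j < length c"
    and "{c ! i, c ! (Suc i mod length c)} = {c ! j, c ! (Suc j mod length c)}"
  shows "i = j"
proof (rule ccontr)
  assume ne: "i \<noteq> j"
  have m3: "length c \<ge> 3" "distinct c" using assms unfolding is_cycle_def by auto
  have m0: "length c > 0" using m3 by linarith
  have si: "Suc i mod length c < length c" "Suc j mod length c < length c"
    using mod_less_divisor[OF m0] by blast+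
  have "c ! i \<noteq> c ! j" using ne m3 assms by (simp add: nth_eq_iff_index_eq)
  then have "c ! i = c ! (Suc j mod length c)" "c ! j = c ! (Suc i mod length c)"
    using assms(4) by (auto simp: doubleton_eq_iff)
  then have "i = Suc j mod length c" "j = Suc i mod length c"
    using m3 assms si by (simp_all add: nth_eq_iff_index_eq)
  then show False using assms(2,3) m3 ne
    by (auto simp: suc_mod_eq split: if_splits)
qed


lemma pigeon:
  assumes disj: "\<forall>i < k. \<forall>j < k. i \<noteq> j \<longrightarrow> cycle_edges (C i) \<inter> cycle_edges (C j) = {}"
    and len: "length es < k"
  shows "\<exists>i<k. cycle_edges (C i) \<inter> set es = {}"
proof (rule ccontr)
  assume "\<not> ?thesis"
  then have ne: "\<forall>i<k. cycle_edges (C i) \<inter> set es \<noteq> {}" by blast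
  define f where "f i = (SOME e. e \<in> cycle_edges (C i) \<inter> set es)" for i
  have f: "f i \<in> cycle_edges (C i) \<inter> set es" if "i < k" for i
  proof -
    have "\<exists>e. e \<in> cycle_edges (C i) \<inter> set es" using ne that by blast
    then show ?thesis unfolding f_def by (rule someI_ex)
  qed
  have "inj_on f {..<k}"
  proof (rule inj_onI)
    fix i j assume "i \<in> {..<k}" "j \<in> {..<k}" "f i = f j"
    then have "f i \<in> cycle_edges (C i) \<inter> cycle_edges (C j)" "i < k" "j < k"
      using f[of i] f[of j] by auto
    then show "i = j" using disj by blast
  qed
  moreover have "f ` {..<k} \<subseteq> set es" using f by auto
  ultimately have "card {..<k} \<le> card (set es)"
    by (meson List.finite_set card_inj_on_le)
  then show False using len card_length[of es] by simp
qed

theorem mainTheorem17: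
  fixes V :: "'a set" and E :: "'a set set"
  assumes "simple_graph V E"
    and "\<forall>k::nat. \<exists>v \<in> V. \<exists>C :: nat \<Rightarrow> 'a list.
           (\<forall>i < k. is_cycle E (C i) \<and> v \<in> set (C i)) \<and>
           (\<forall>i < k. \<forall>j < k. i \<noteq> j \<longrightarrow> cycle_edges (C i) \<inter> cycle_edges (C j) = {})"
  shows "omega_evadible V E"
  unfolding omega_evadible_def
proof
  fix k :: nat
  obtain v C where vV: "v \<in> V" and cyc: "\<forall>i < k. is_cycle E (C i) \<and> v \<in> set (C i)"
    and disj: "\<forall>i < k. \<forall>j < k. i \<noteq> j \<longrightarrow> cycle_edges (C i) \<inter> cycle_edges (C j) = {}"
    using assms(2) by blast
  define pos where "pos i = (SOME p. p < length (C i) \<and> C i ! p = v)" for i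
  have pos: "pos i < length (C i) \<and> C i ! pos i = v" if "i < k" for i
  proof -
    have "\<exists>p. p < length (C i) \<and> C i ! p = v" using cyc that by (simp add: in_set_conv_nth)
    then show ?thesis unfolding pos_def by (rule someI_ex)
  qed
  define sel where "sel es = (SOME i. i < k \<and> cycle_edges (C i) \<inter> set es = {})" for es :: "'a set list"
  have sel: "sel es < k \<and> cycle_edges (C (sel es)) \<inter> set es = {}" if "length es < k" for es
  proof -
    have "\<exists>i. i < k \<and> cycle_edges (C i) \<inter> set es = {}" using pigeon[OF disj that] by blast
    then show ?thesis unfolding sel_def by (rule someI_ex)
  qed
  define nx where "nx i = C i ! (Suc (pos i) mod length (C i))" for i
  define \<sigma> where "\<sigma> es = (if even (length es) then v else nx (sel es))" for es :: "'a set list"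
  have key: "nx i \<noteq> v \<and> (v, nx i) \<in> (adj (E - D))\<^sup>*"
    if "i < k" "cycle_edges (C i) \<inter> D = {}" for i D
  proof -
    let ?c = "C i" let ?m = "length (C i)" let ?p = "pos i"
    have ic: "is_cycle E ?c" using cyc that by blast
    have p: "?p < ?m" "?c ! ?p = v" using pos[OF that(1)] by auto
    have "nx i \<noteq> v" using cyc_basic(2)[OF ic p(1)] p unfolding nx_def by simp
    moreover have "{?c ! ?p, ?c ! (Suc ?p mod ?m)} \<in> cycle_edges ?c"
      unfolding cycle_edges_def using p(1) by auto
    then have "(?c ! (?p mod ?m), ?c ! ((?p + 1) mod ?m)) \<in> (adj (E - D))\<^sup>*"
      using cyc_path[OF ic, of 1 ?p D] that(2) p(1) by auto
    ultimately show ?thesis using p unfolding nx_def by simp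
  qed
  have bk: "(nx i, v) \<in> (adj (E - set es))\<^sup>*"
    if "i < k" "cycle_edges (C i) \<inter> set (butlast es) = {}" "es \<noteq> []" for i es
  proof -
    let ?c = "C i" let ?m = "length (C i)" let ?p = "pos i"
    have ic: "is_cycle E ?c" using cyc that by blast
    have p: "?p < ?m" "?c ! ?p = v" using pos[OF that(1)] by auto
    have m3: "?m \<ge> 3" using ic unfolding is_cycle_def by simp
    have ses: "set es = insert (last es) (set (butlast es))"
      using that(3) by (metis append_butlast_last_id list.simps(15) rotate1.simps(2) set_rotate1)
    define e0 where "e0 = {?c ! ?p, ?c ! (Suc ?p mod ?m)}"
    have e0c: "e0 \<in> cycle_edges ?c" unfolding e0_def cycle_edges_def using p(1) by auto
    show ?thesis
    proof (cases "e0 \<in> set es")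
      case False
      have "e0 \<in> E" "?c ! ?p \<noteq> ?c ! (Suc ?p mod ?m)" using cyc_basic[OF ic p(1)] e0_def by auto
      then have "(nx i, v) \<in> adj (E - set es)"
        using False p unfolding adj_def nx_def e0_def by (auto simp: insert_commute)
      then show ?thesis by blast
    next
      case True
      then have el: "e0 = last es" using ses e0c that(2) by blast
      have "\<forall>t<?m - 1. {?c ! ((Suc ?p + t) mod ?m), ?c ! (Suc (Suc ?p + t) mod ?m)} \<notin> set es"
      proof (intro allI impI)
        fix t assume t: "t < ?m - 1"
        define q where "q = (Suc ?p + t) mod ?m"
        have m0: "?m > 0" using p(1) by linarith
        have q: "q < ?m" unfolding q_def using mod_less_divisor[OF m0] by blast
        have sq: "Suc q mod ?m = Suc (Suc ?p + t) mod ?m" unfolding q_def by (simp add: mod_Suc_eq)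
        have qp: "q \<noteq> ?p"
        proof
          assume "q = ?p"
          have lt: "Suc ?p + t < 2 * ?m" using t p(1) by linarith
          show False using \<open>q = ?p\<close> t p(1) q_def mod2[OF lt] by (auto split: if_splits)
        qed
        have ec: "{?c ! q, ?c ! (Suc q mod ?m)} \<in> cycle_edges ?c" unfolding cycle_edges_def using q by auto
        have "{?c ! q, ?c ! (Suc q mod ?m)} \<noteq> e0"
          using cyc_edge_inj[OF ic q p(1)] qp unfolding e0_def by blast
        then show "{?c ! ((Suc ?p + t) mod ?m), ?c ! (Suc (Suc ?p + t) mod ?m)} \<notin> set es"
          using ec ses el that(2) q_def sq by auto
      qed
      from cyc_path[OF ic this]
      have "(?c ! (Suc ?p mod ?m), ?c ! ((Suc ?p + (?m - 1)) mod ?m)) \<in> (adj (E - set es))\<^sup>*" .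
      moreover have "Suc ?p + (?m - 1) = ?p + ?m" using m3 by linarith
      then have "(Suc ?p + (?m - 1)) mod ?m = ?p" using p(1) by simp
      ultimately show ?thesis using p unfolding nx_def by simp
    qed
  qed
  show "k_evadible V E k"
    unfolding k_evadible_def
  proof (rule exI[of _ \<sigma>], rule conjI)
    show "\<sigma> [] \<in> V" unfolding \<sigma>_def using vV by simp
  next
   show "\<forall>es. es \<noteq> [] \<and> length es \<le> k - 1 \<and> distinct es \<and> set es \<subseteq> E \<longrightarrow>
        \<sigma> es \<noteq> \<sigma> (butlast es) \<and> (\<sigma> (butlast es), \<sigma> es) \<in> (adj (E - set es))\<^sup>*"
   proof (intro allI impI)
    fix es :: "'a set list"
    assume h: "es \<noteq> [] \<and> length es \<le> k - 1 \<and> distinct es \<and> set es \<subseteq> E"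
    then have "length es > 0" "length es \<le> k - 1" by auto
    then have lk: "length es < k" by linarith
    have lb: "length (butlast es) = length es - 1" by simp
    have sb: "set (butlast es) \<subseteq> set es" by (meson in_set_butlastD subsetI)
    show "\<sigma> es \<noteq> \<sigma> (butlast es) \<and> (\<sigma> (butlast es), \<sigma> es) \<in> (adj (E - set es))\<^sup>*"
    proof (cases "even (length es)")
      case True
      then have ob: "odd (length (butlast es))" using h lb by (cases es) auto
      have s: "sel (butlast es) < k \<and> cycle_edges (C (sel (butlast es))) \<inter> set (butlast es) = {}"
        using sel[of "butlast es"] lk lb by simp
      show ?thesis using True ob key[OF conjunct1[OF s] conjunct2[OF s]]
          bk[OF conjunct1[OF s] conjunct2[OF s]] h unfolding \<sigma>_def by auto
    next
      case False
      then have ob: "even (length (butlast es))" using h lb by (cases es) auto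
      have s: "sel es < k \<and> cycle_edges (C (sel es)) \<inter> set es = {}"
        using sel lk by simp
      show ?thesis using False ob key[OF conjunct1[OF s] conjunct2[OF s]] unfolding \<sigma>_def by auto
    qed
   qed
  qed
qed

end
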